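(* Fix integers $t,\omega$ with $2\le t\le\omega$. For $\Delta\ge1$ let $a=\lfloor\Delta/(\omega-1)\rfloor$. Then as $\Delta\to\infty$, \[ f_t(\Delta,\omega)=(1+o(1))\,\rho_t\big(T(\Delta+a,\omega)\big)=(1+o(1))\,\frac1t\binom{\omega-1}{t-1}\Big(\frac{\Delta}{\omega-1}\Big)^{t-1}. \]
   Context: $\mathcal{G}(\Delta,\omega)$ denotes the class of finite simple graphs $G$ with maximum degree $\Delta(G)\le\Delta$ and clique number $\omega(G)\le\omega$. $k_t(G)$ is the number of copies of $K_t$ in $G$ and $\rho_t(G)=k_t(G)/|V(G)|$. $f_t(\Delta,\omega)=\sup\{\rho_t(G): G\in\mathcal{G}(\Delta,\omega),\ |V(G)|\ge 1\}$. $T(n,r)$ denotes the $r$-partite Turán graph on $n$ vertices: the complete $r$-partite graph on $n$ vertices whose part sizes are all $\lfloor n/r\rfloor$ or $\lceil n/r\rceil$ (when $n<r$ this is $K_n$). *)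

theory Defs
  imports "HOL-Analysis.Analysis" "HOL-Library.Landau_Symbols"
begin

text \<open>Every finite simple graph is isomorphic to one
  of this form, so the supremum below ranges over all finite simple graphs.\<close>

definition simple_graph :: "nat set \<Rightarrow> nat set set \<Rightarrow> bool" where
  "simple_graph V E \<longleftrightarrow> finite V \<and> (\<forall>e\<in>E. e \<subseteq> V \<and> card e = 2)"

definition degree :: "nat set \<Rightarrow> nat set set \<Rightarrow> nat \<Rightarrow> nat" where
  "degree V E v = card {u \<in> V. {u, v} \<in> E}"

definition max_degree :: "nat set \<Rightarrow> nat set set \<Rightarrow> nat" where
  "max_degree V E = Max (insert 0 (degree V E ` V))"

definition is_clique :: "nat set \<Rightarrow> nat set set \<Rightarrow> nat set \<Rightarrow> bool" where
  "is_clique V E K \<longleftrightarrow> K \<subseteq> V \<and> (\<forall>u\<in>K. \<forall>v\<in>K. u \<noteq> v \<longrightarrow> {u, v} \<in> E)"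

definition clique_number :: "nat set \<Rightarrow> nat set set \<Rightarrow> nat" where
  "clique_number V E = Max (card ` {K. is_clique V E K})"

definition num_cliques :: "nat \<Rightarrow> nat set \<Rightarrow> nat set set \<Rightarrow> nat" where
  "num_cliques t V E = card {K. is_clique V E K \<and> card K = t}"

definition rho :: "nat \<Rightarrow> nat set \<Rightarrow> nat set set \<Rightarrow> real" where
  "rho t V E = real (num_cliques t V E) / real (card V)"

definition graph_class :: "nat \<Rightarrow> nat \<Rightarrow> (nat set \<times> nat set set) set" where
  "graph_class \<Delta> \<omega> = {(V, E). simple_graph V E \<and> max_degree V E \<le> \<Delta> \<and> clique_number V E \<le> \<omega>}"

definition f_sup :: "nat \<Rightarrow> nat \<Rightarrow> nat \<Rightarrow> real" where
  "f_sup t \<Delta> \<omega> = Sup {rho t V E | V E. (V, E) \<in> graph_class \<Delta> \<omega> \<and> card V \<ge> 1}"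

text \<open>Turan graph T(n,r): vertices 0..n-1, parts are residue classes mod r
  (part sizes floor(n/r) or ceil(n/r)); edges join vertices in different parts.\<close>
definition turan_V :: "nat \<Rightarrow> nat set" where
  "turan_V n = {0..<n}"

definition turan_E :: "nat \<Rightarrow> nat \<Rightarrow> nat set set" where
  "turan_E n r = {{i, j} | i j. i < n \<and> j < n \<and> i mod r \<noteq> j mod r}"

end

theory Submission
  imports Defs
begin


lemma hom_bernoulli_Suc:
  fixes a b :: real
  assumes "a \<ge> 0" "a + b \<ge> 0"
  shows "a ^ Suc k + real (Suc k) * a ^ k * b \<le> (a + b) ^ Suc k"
proof (induction k)
  case 0 then show ?case by simp
next
  case (Suc k)
  have "(a + b) * (a ^ Suc k + real (Suc k) * a ^ k * b) \<le> (a + b) * (a + b) ^ Suc k"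
    using Suc.IH assms(2) by (rule mult_left_mono)
  moreover have "(a + b) * (a ^ Suc k + real (Suc k) * a ^ k * b)
     = a ^ Suc (Suc k) + real (Suc (Suc k)) * a ^ Suc k * b + real (Suc k) * a ^ k * (b * b)"
    by (simp add: algebra_simps)
  moreover have "real (Suc k) * a ^ k * (b * b) \<ge> 0"
    using assms(1) by simp
  ultimately show ?case by simp
qed

lemma cross_le:
  fixes X Y P Q :: real
  assumes "Q > 0" "P > 0" "X * P \<le> Y * Q"
  shows "X / Q \<le> Y / P"
proof -
  have "X / Q = (X * P) / (Q * P)" using assms by simp
  also have "\<dots> \<le> (Y * Q) / (Q * P)" using assms by (intro divide_right_mono) auto
  also have "\<dots> = Y / P" using assms by simp
  finally show ?thesis .
qed

lemma mac_step:
  fixes y z :: real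
  assumes yge: "y \<ge> 0" and zge: "z \<ge> 0"
  shows "real (m choose Suc k) * y ^ Suc k + z * (real (m choose k) * y ^ k)
         \<le> real (Suc m choose Suc k) * ((real m * y + z) / real (Suc m)) ^ Suc k"
proof -
  define c1 where "c1 = real (m choose k)"
  define c2 where "c2 = real (m choose Suc k)"
  define cc where "cc = real (Suc m choose Suc k)"
  have pas: "cc = c1 + c2" by (simp add: cc_def c1_def c2_def)
  have st0: "real (Suc m choose Suc k) * real (Suc k) = real (Suc m) * real (m choose k)"
    by (simp only: of_nat_mult[symmetric] Suc_times_binomial_eq)
  have st: "cc * (real k + 1) = (real m + 1) * c1"
    using st0 unfolding cc_def c1_def of_nat_Suc by (simp add: algebra_simps)
  have mp: "real m + 1 > 0" by simp
  have e1: "y + (z - y) / (real m + 1) = (real m * y + z) / real (Suc m)"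
    using mp by (simp add: field_simps)
  have prem: "0 \<le> y + (z - y) / (real m + 1)"
    unfolding e1 using yge zge by simp
  have b: "y ^ Suc k + real (Suc k) * y ^ k * ((z - y) / (real m + 1))
          \<le> (y + (z - y) / (real m + 1)) ^ Suc k"
    by (rule hom_bernoulli_Suc[OF yge prem])
  have ccge: "cc \<ge> 0" by (simp add: cc_def)
  have i1: "cc * (y ^ Suc k + real (Suc k) * y ^ k * ((z - y) / (real m + 1)))
        \<le> cc * ((real m * y + z) / real (Suc m)) ^ Suc k"
    using mult_left_mono[OF b ccge] unfolding e1 .
  define w where "w = (z - y) / (real m + 1)"
  have wz: "z - y = w * (real m + 1)" using mp by (simp add: w_def)
  have "cc * (real (Suc k) * y ^ k * ((z - y) / (real m + 1)))
          = (cc * (real k + 1)) * y ^ k * w"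
    unfolding w_def[symmetric] by (simp add: algebra_simps)
  also have "\<dots> = c1 * y ^ k * (w * (real m + 1))" using st by (simp add: algebra_simps)
  also have "\<dots> = c1 * (y ^ k * (z - y))" using wz by simp
  finally have i2: "cc * (real (Suc k) * y ^ k * ((z - y) / (real m + 1))) = c1 * (y ^ k * (z - y))" .
  have i3: "cc * y ^ Suc k = c1 * y ^ Suc k + c2 * y ^ Suc k" using pas by (simp add: algebra_simps)
  have i4: "c1 * (y ^ k * (z - y)) = z * (c1 * y ^ k) - c1 * y ^ Suc k" by (simp add: algebra_simps)
  have "cc * (y ^ Suc k + real (Suc k) * y ^ k * ((z - y) / (real m + 1)))
        = c2 * y ^ Suc k + z * (c1 * y ^ k)"
    using i2 i3 i4 by (simp add: distrib_left)
  then show ?thesis using i1 unfolding c1_def c2_def cc_def by linarith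
qed

lemma binom_ratio_step:
  assumes "q \<ge> 1"
  shows "real (q choose s) / real q ^ s \<le> real (Suc q choose s) / real (Suc q) ^ s"
proof (cases s)
  case 0 then show ?thesis by simp
next
  case (Suc k)
  define c where "c = real (q choose k)"
  define d where "d = real (q choose Suc k)"
  define e where "e = real (Suc q choose Suc k)"
  have cge: "c \<ge> 0" by (simp add: c_def)
  have st0: "real (Suc q choose Suc k) * real (Suc k) = real (Suc q) * real (q choose k)"
    by (simp only: of_nat_mult[symmetric] Suc_times_binomial_eq)
  have A1: "e * (real k + 1) = (real q + 1) * c"
    using st0 unfolding e_def c_def of_nat_Suc by (simp add: algebra_simps)
  have pas: "e = c + d" by (simp add: e_def c_def d_def)
  have A2: "d * (real k + 1) = (real q - real k) * c"
    using A1 pas by (simp add: algebra_simps)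
  have hb: "(real q + 1) ^ Suc k + real (Suc k) * (real q + 1) ^ k * (-1) \<le> (real q + 1 + (-1)) ^ Suc k"
    by (rule hom_bernoulli_Suc) auto
  hence hb': "(real q - real k) * (real q + 1) ^ k \<le> real q ^ Suc k"
    by (simp add: algebra_simps)
  have qp: "real q > 0" using assms by simp
  have key: "d * (real q + 1) ^ Suc k \<le> e * real q ^ Suc k"
  proof -
    have "d * (real q + 1) ^ Suc k * (real k + 1) = (d * (real k + 1)) * ((real q + 1) ^ k * (real q + 1))"
      by (simp add: algebra_simps)
    also have "\<dots> = ((real q - real k) * c) * ((real q + 1) ^ k * (real q + 1))"
      using A2 by simp
    also have "\<dots> = ((real q - real k) * (real q + 1) ^ k) * (c * (real q + 1))"
      by (simp add: algebra_simps)
    also have "\<dots> \<le> real q ^ Suc k * (c * (real q + 1))"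
      using hb' cge qp by (intro mult_right_mono) auto
    also have "\<dots> = real q ^ Suc k * ((real q + 1) * c)"
      by (simp add: algebra_simps)
    also have "\<dots> = real q ^ Suc k * (e * (real k + 1))"
      by (simp only: A1)
    also have "\<dots> = e * real q ^ Suc k * (real k + 1)"
      by (simp add: algebra_simps)
    finally show ?thesis by (simp add: mult_le_cancel_right)
  qed
  have rs: "real (Suc q) = real q + 1" by simp
  have "d / real q ^ Suc k \<le> e / (real q + 1) ^ Suc k"
    by (rule cross_le) (use qp key in auto)
  then show ?thesis unfolding Suc rs d_def e_def .
qed




definition esym :: "nat set \<Rightarrow> nat \<Rightarrow> (nat \<Rightarrow> real) \<Rightarrow> real" where
  "esym A s x = (\<Sum>K\<in>{K. K \<subseteq> A \<and> card K = s}. \<Prod>i\<in>K. x i)"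

lemma esym_insert:
  assumes "finite A" "a \<notin> A"
  shows "esym (insert a A) (Suc s) x = esym A (Suc s) x + x a * esym A s x"
proof -
  have eq: "{K. K \<subseteq> insert a A \<and> card K = Suc s} =
      {K. K \<subseteq> A \<and> card K = Suc s} \<union> insert a ` {K. K \<subseteq> A \<and> card K = s}"
  proof (intro set_eqI iffI)
    fix K assume K: "K \<in> {K. K \<subseteq> insert a A \<and> card K = Suc s}"
    then have K1: "K \<subseteq> insert a A" and K2: "card K = Suc s" by auto
    show "K \<in> {K. K \<subseteq> A \<and> card K = Suc s} \<union> insert a ` {K. K \<subseteq> A \<and> card K = s}"
    proof (cases "a \<in> K")
      case True
      have e: "K = insert a (K - {a})" using True by blast
      have s1: "K - {a} \<subseteq> A" using K1 by blast
      have s2: "card (K - {a}) = s" using K2 True by (simp add: card_Diff_singleton)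
      have "K - {a} \<in> {K. K \<subseteq> A \<and> card K = s}" using s1 s2 by blast
      then have "K \<in> insert a ` {K. K \<subseteq> A \<and> card K = s}" using e by blast
      then show ?thesis by blast
    next
      case False
      then have "K \<subseteq> A" using K1 by blast
      then show ?thesis using K2 by blast
    qed
  next
    fix K assume "K \<in> {K. K \<subseteq> A \<and> card K = Suc s} \<union> insert a ` {K. K \<subseteq> A \<and> card K = s}"
    then show "K \<in> {K. K \<subseteq> insert a A \<and> card K = Suc s}"
    proof
      assume "K \<in> insert a ` {K. K \<subseteq> A \<and> card K = s}"
      then obtain J where J: "J \<subseteq> A" "card J = s" "K = insert a J" by blast
      have fJ: "finite J" using J(1) assms(1) by (rule finite_subset)
      have aJ: "a \<notin> J" using J(1) assms(2) by blast
      have "card K = Suc s" using J(2,3) fJ aJ by simp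
      moreover have "K \<subseteq> insert a A" using J(1,3) by blast
      ultimately show ?thesis by blast
    next
      assume "K \<in> {K. K \<subseteq> A \<and> card K = Suc s}"
      then show ?thesis by blast
    qed
  qed
  have fin1: "finite {K. K \<subseteq> A \<and> card K = Suc s}" using assms(1) by simp
  have fin2: "finite (insert a ` {K. K \<subseteq> A \<and> card K = s})" using assms(1) by simp
  have disj: "{K. K \<subseteq> A \<and> card K = Suc s} \<inter> insert a ` {K. K \<subseteq> A \<and> card K = s} = {}"
    using assms(2) by blast
  have inj: "inj_on (insert a) {K. K \<subseteq> A \<and> card K = s}"
  proof (rule inj_onI)
    fix J1 J2 assume J1: "J1 \<in> {K. K \<subseteq> A \<and> card K = s}" and J2: "J2 \<in> {K. K \<subseteq> A \<and> card K = s}"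
      and e: "insert a J1 = insert a J2"
    have "a \<notin> J1" "a \<notin> J2" using J1 J2 assms(2) by blast+
    then show "J1 = J2" using e by (metis Diff_insert_absorb)
  qed
  have "esym (insert a A) (Suc s) x = esym A (Suc s) x +
        (\<Sum>K\<in>insert a ` {K. K \<subseteq> A \<and> card K = s}. \<Prod>i\<in>K. x i)"
    unfolding esym_def eq by (rule sum.union_disjoint[OF fin1 fin2 disj])
  also have "(\<Sum>K\<in>insert a ` {K. K \<subseteq> A \<and> card K = s}. \<Prod>i\<in>K. x i)
      = (\<Sum>K\<in>{K. K \<subseteq> A \<and> card K = s}. \<Prod>i\<in>insert a K. x i)"
    by (rule sum.reindex[OF inj, unfolded comp_def])
  also have "\<dots> = (\<Sum>K\<in>{K. K \<subseteq> A \<and> card K = s}. x a * (\<Prod>i\<in>K. x i))"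
  proof (rule sum.cong[OF refl])
    fix K assume K: "K \<in> {K. K \<subseteq> A \<and> card K = s}"
    have "finite K" using K assms(1) finite_subset by blast
    moreover have "a \<notin> K" using K assms(2) by blast
    ultimately show "(\<Prod>i\<in>insert a K. x i) = x a * (\<Prod>i\<in>K. x i)" by simp
  qed
  also have "\<dots> = x a * esym A s x" unfolding esym_def by (simp add: sum_distrib_left)
  finally show ?thesis .
qed

lemma esym_0: "finite A \<Longrightarrow> esym A 0 x = 1"
proof -
  assume "finite A"
  then have "{K. K \<subseteq> A \<and> card K = 0} = {{}}"
    by (auto dest: card_0_eq[OF finite_subset])
  then show ?thesis by (simp add: esym_def)
qed

lemma esym_empty_Suc: "esym {} (Suc s) x = 0"
  by (simp add: esym_def)

lemma maclaurin:
  assumes "finite A" "\<forall>i\<in>A. x i \<ge> 0"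
  shows "esym A s x \<le> real (card A choose s) * (sum x A / real (card A)) ^ s"
  using assms
proof (induction A arbitrary: s rule: finite_induct)
  case empty
  then show ?case by (cases s) (auto simp: esym_0 esym_empty_Suc)
next
  case (insert a A)
  show ?case
  proof (cases s)
    case 0
    then show ?thesis using insert by (simp add: esym_0)
  next
    case (Suc k)
    define m where "m = card A"
    define S where "S = sum x A"
    define y where "y = S / real m"
    define z where "z = x a"
    have S_eq: "S = real m * y"
    proof (cases "m = 0")
      case True
      then have "A = {}" using insert m_def by auto
      then show ?thesis using True by (simp add: S_def)
    next
      case False then show ?thesis by (simp add: y_def)
    qed
    have Sge: "S \<ge> 0" unfolding S_def using insert by (intro sum_nonneg) auto
    have yge: "y \<ge> 0" using Sge by (simp add: y_def)
    have zge: "z \<ge> 0" using insert by (simp add: z_def)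
    have IH1: "esym A (Suc k) x \<le> real (m choose Suc k) * y ^ Suc k"
      unfolding m_def y_def S_def by (rule insert.IH) (use insert.prems in auto)
    have IH2: "esym A k x \<le> real (m choose k) * y ^ k"
      unfolding m_def y_def S_def by (rule insert.IH) (use insert.prems in auto)
    have "esym (insert a A) s x = esym A (Suc k) x + z * esym A k x"
      using insert Suc by (simp add: esym_insert z_def)
    also have "\<dots> \<le> real (m choose Suc k) * y ^ Suc k + z * (real (m choose k) * y ^ k)"
      using IH1 IH2 zge by (intro add_mono mult_left_mono) auto
    also have "\<dots> \<le> real (Suc m choose Suc k) * ((real m * y + z) / real (Suc m)) ^ Suc k"
      by (rule mac_step[OF yge zge])
    also have "real m * y + z = sum x (insert a A)"
      using insert S_eq by (simp add: S_def z_def add.commute)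
    also have "Suc m = card (insert a A)" using insert by (simp add: m_def)
    finally show ?thesis unfolding Suc .
  qed
qed

lemma binom_ratio_mono:
  assumes "1 \<le> q" "q \<le> r"
  shows "real (q choose s) / real q ^ s \<le> real (r choose s) / real r ^ s"
  using assms(2)
proof (induction r rule: dec_induct)
  case base then show ?case by simp
next
  case (step n)
  then show ?case using binom_ratio_step[of n s] assms(1) by linarith
qed

definition CL :: "nat set \<Rightarrow> nat set set \<Rightarrow> nat \<Rightarrow> nat set set" where
  "CL V E s = {K. is_clique V E K \<and> card K = s}"

definition PP :: "nat set \<Rightarrow> nat set set \<Rightarrow> nat \<Rightarrow> (nat \<Rightarrow> real) \<Rightarrow> real" where
  "PP V E s x = (\<Sum>K\<in>CL V E s. \<Prod>i\<in>K. x i)"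

lemma finite_CL: "finite V \<Longrightarrow> finite (CL V E s)"
  by (rule finite_subset[of _ "Pow V"]) (auto simp: CL_def is_clique_def)




lemma PP_decomp:
  assumes "finite V" "u \<noteq> v" "{u, v} \<notin> E" "\<forall>i. i \<noteq> u \<and> i \<noteq> v \<longrightarrow> y i = x i"
  shows "PP V E s y = (\<Sum>K\<in>{K\<in>CL V E s. u \<notin> K \<and> v \<notin> K}. \<Prod>i\<in>K. x i)
           + y u * (\<Sum>K\<in>{K\<in>CL V E s. u \<in> K}. \<Prod>i\<in>K - {u}. x i)
           + y v * (\<Sum>K\<in>{K\<in>CL V E s. v \<in> K}. \<Prod>i\<in>K - {v}. x i)"
proof -
  let ?C = "CL V E s"
  let ?Cn = "{K\<in>?C. u \<notin> K \<and> v \<notin> K}"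
  let ?Cu = "{K\<in>?C. u \<in> K}"
  let ?Cv = "{K\<in>?C. v \<in> K}"
  have fin: "finite ?C" using assms(1) by (rule finite_CL)
  have noboth: "\<And>K. K \<in> ?C \<Longrightarrow> u \<in> K \<Longrightarrow> v \<in> K \<Longrightarrow> False"
    using assms(2,3) by (auto simp: CL_def is_clique_def)
  have finK: "\<And>K. K \<in> ?C \<Longrightarrow> finite K"
    using assms(1) by (auto simp: CL_def is_clique_def intro: finite_subset)
  have Ceq: "?C = ?Cn \<union> ?Cu \<union> ?Cv" by auto
  have "PP V E s y = (\<Sum>K\<in>?Cn \<union> ?Cu \<union> ?Cv. \<Prod>i\<in>K. y i)"
    unfolding PP_def using Ceq by simp
  also have "\<dots> = (\<Sum>K\<in>?Cn. \<Prod>i\<in>K. y i) + (\<Sum>K\<in>?Cu. \<Prod>i\<in>K. y i) + (\<Sum>K\<in>?Cv. \<Prod>i\<in>K. y i)"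
  proof -
    have d1: "(?Cn \<union> ?Cu) \<inter> ?Cv = {}" using noboth by auto
    have d2: "?Cn \<inter> ?Cu = {}" by auto
    have f0: "finite ?Cn" "finite ?Cu" "finite ?Cv"
      by (rule finite_subset[OF _ fin], blast)+
    show ?thesis
      by (simp add: sum.union_disjoint[OF _ f0(3) d1] sum.union_disjoint[OF f0(1,2) d2] f0)
  qed
  also have "(\<Sum>K\<in>?Cn. \<Prod>i\<in>K. y i) = (\<Sum>K\<in>?Cn. \<Prod>i\<in>K. x i)"
    using assms(4) by (intro sum.cong refl prod.cong) auto
  also have "(\<Sum>K\<in>?Cu. \<Prod>i\<in>K. y i) = y u * (\<Sum>K\<in>?Cu. \<Prod>i\<in>K - {u}. x i)"
    unfolding sum_distrib_left
  proof (rule sum.cong[OF refl])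
    fix K assume K: "K \<in> ?Cu"
    then have "(\<Prod>i\<in>K. y i) = y u * (\<Prod>i\<in>K - {u}. y i)"
      using finK by (auto intro: prod.remove)
    also have "(\<Prod>i\<in>K - {u}. y i) = (\<Prod>i\<in>K - {u}. x i)"
      using K noboth assms(4) by (intro prod.cong refl) auto
    finally show "(\<Prod>i\<in>K. y i) = y u * (\<Prod>i\<in>K - {u}. x i)" .
  qed
  also have "(\<Sum>K\<in>?Cv. \<Prod>i\<in>K. y i) = y v * (\<Sum>K\<in>?Cv. \<Prod>i\<in>K - {v}. x i)"
    unfolding sum_distrib_left
  proof (rule sum.cong[OF refl])
    fix K assume K: "K \<in> ?Cv"
    then have "(\<Prod>i\<in>K. y i) = y v * (\<Prod>i\<in>K - {v}. y i)"
      using finK by (auto intro: prod.remove)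
    also have "(\<Prod>i\<in>K - {v}. y i) = (\<Prod>i\<in>K - {v}. x i)"
    proof -
      have "u \<notin> K" using K noboth by blast
      then show ?thesis using assms(4) by (intro prod.cong refl) auto
    qed
    finally show "(\<Prod>i\<in>K. y i) = y v * (\<Prod>i\<in>K - {v}. x i)" .
  qed
  finally show ?thesis .
qed

lemma sum_two:
  assumes "finite V" "u \<in> V" "v \<in> V" "u \<noteq> v"
  shows "sum f V = f u + f v + sum f (V - {u} - {v})"
  using assms by (simp add: sum.remove[of V u] sum.remove[of "V - {u}" v] add.assoc)

lemma lagr:
  assumes "finite V" "r > 0"
  shows "(\<forall>i. x i \<ge> 0) \<Longrightarrow> (\<forall>K. is_clique V E K \<and> K \<subseteq> {i\<in>V. x i \<noteq> 0} \<longrightarrow> card K \<le> r)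
         \<Longrightarrow> PP V E s x \<le> real (r choose s) * (sum x V / real r) ^ s"
proof (induction "card {i\<in>V. x i \<noteq> 0}" arbitrary: x rule: less_induct)
  case less
  define S where "S = {i\<in>V. x i \<noteq> 0}"
  have SV: "S \<subseteq> V" by (auto simp: S_def)
  have finS: "finite S" using SV assms(1) finite_subset by blast
  have sumS: "sum x S = sum x V"
    using assms(1) SV by (intro sum.mono_neutral_left) (auto simp: S_def)
  have sumge: "sum x V \<ge> 0" using less.prems by (intro sum_nonneg) auto
  have rhsge: "0 \<le> real (r choose s) * (sum x V / real r) ^ s" using sumge by simp
  show ?case
  proof (cases "is_clique V E S")
    case True
    have cS: "card S \<le> r" using spec[OF less.prems(2), of S] True by (simp add: S_def)
    have PPeq: "PP V E s x = esym S s x"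
      unfolding PP_def esym_def
    proof (rule sum.mono_neutral_right)
      show "finite (CL V E s)" using assms(1) by (rule finite_CL)
      show "{K. K \<subseteq> S \<and> card K = s} \<subseteq> CL V E s"
        using True SV by (auto simp: CL_def is_clique_def)
      show "\<forall>K\<in>CL V E s - {K. K \<subseteq> S \<and> card K = s}. (\<Prod>i\<in>K. x i) = 0"
      proof
        fix K assume K: "K \<in> CL V E s - {K. K \<subseteq> S \<and> card K = s}"
        then obtain i where i: "i \<in> K" "i \<notin> S" by (auto simp: CL_def)
        have "K \<subseteq> V" using K by (auto simp: CL_def is_clique_def)
        then have "x i = 0" "finite K" using i assms(1) finite_subset by (auto simp: S_def)
        then show "(\<Prod>i\<in>K. x i) = 0" using i by (auto intro: prod_zero)
      qed
    qed
    have mac: "esym S s x \<le> real (card S choose s) * (sum x S / real (card S)) ^ s"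
      using finS less.prems(1) by (intro maclaurin) auto
    show ?thesis
    proof (cases "card S = 0")
      case True
      show ?thesis
      proof (cases s)
        case 0 then show ?thesis using PPeq mac True by simp
      next
        case (Suc k) then show ?thesis using PPeq mac True rhsge by simp
      qed
    next
      case False
      have "real (card S choose s) * (sum x S / real (card S)) ^ s
            = real (card S choose s) / real (card S) ^ s * sum x V ^ s"
        using sumS by (simp add: power_divide)
      also have "\<dots> \<le> real (r choose s) / real r ^ s * sum x V ^ s"
        using binom_ratio_mono[of "card S" r s] False cS sumge
        by (intro mult_right_mono) auto
      also have "\<dots> = real (r choose s) * (sum x V / real r) ^ s"
        by (simp add: power_divide)
      finally show ?thesis using PPeq mac by simp
    qed
  next
    case False
    have "\<not> (\<forall>a\<in>S. \<forall>b\<in>S. a \<noteq> b \<longrightarrow> {a, b} \<in> E)"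
      using False SV unfolding is_clique_def by blast
    then obtain u v where uv: "u \<in> S" "v \<in> S" "u \<noteq> v" "{u, v} \<notin> E"
      by blast
    have uV: "u \<in> V" "v \<in> V" using uv SV by blast+
    have xnz: "x u \<noteq> 0" "x v \<noteq> 0" using uv unfolding S_def by blast+
    have xge: "x u \<ge> 0" "x v \<ge> 0" using less.prems(1) by blast+
    have xpos: "x u > 0" "x v > 0" using xnz xge by (metis less_eq_real_def)+
    define x1 where "x1 = x(u := x u + x v, v := 0)"
    define x2 where "x2 = x(v := x u + x v, u := 0)"
    have x1val: "x1 u = x u + x v" "x2 v = x u + x v" using uv(3) unfolding x1_def x2_def by auto
    have x1u: "x1 u \<noteq> 0" "x1 v = 0" "\<And>i. i \<noteq> u \<Longrightarrow> i \<noteq> v \<Longrightarrow> x1 i = x i"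
      using xpos uv(3) unfolding x1_def by auto
    have x2u: "x2 v \<noteq> 0" "x2 u = 0" "\<And>i. i \<noteq> u \<Longrightarrow> i \<noteq> v \<Longrightarrow> x2 i = x i"
      using xpos uv(3) unfolding x2_def by auto
    have sup1: "{i\<in>V. x1 i \<noteq> 0} = S - {v}"
    proof (intro set_eqI)
      fix i show "i \<in> {i\<in>V. x1 i \<noteq> 0} \<longleftrightarrow> i \<in> S - {v}"
        using x1u uV uv(1,3) unfolding S_def by (cases "i = u"; cases "i = v") auto
    qed
    have sup2: "{i\<in>V. x2 i \<noteq> 0} = S - {u}"
    proof (intro set_eqI)
      fix i show "i \<in> {i\<in>V. x2 i \<noteq> 0} \<longleftrightarrow> i \<in> S - {u}"
        using x2u uV uv(2,3) unfolding S_def by (cases "i = u"; cases "i = v") auto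
    qed
    have cS0: "card {i\<in>V. x i \<noteq> 0} = card S" by (simp only: S_def)
    have "S - {v} \<subset> S" using uv(2) by blast
    then have "card (S - {v}) < card S" using finS by (intro psubset_card_mono)
    then have lt1: "card {i\<in>V. x1 i \<noteq> 0} < card {i\<in>V. x i \<noteq> 0}"
      using cS0 sup1 by simp
    have "S - {u} \<subset> S" using uv(1) by blast
    then have "card (S - {u}) < card S" using finS by (intro psubset_card_mono)
    then have lt2: "card {i\<in>V. x2 i \<noteq> 0} < card {i\<in>V. x i \<noteq> 0}"
      using cS0 sup2 by simp
    have nn1: "\<forall>i. x1 i \<ge> 0" "\<forall>i. x2 i \<ge> 0"
    proof -
      have "x u + x v \<ge> 0" using xge by simp
      then show "\<forall>i. x1 i \<ge> 0" "\<forall>i. x2 i \<ge> 0"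
        using less.prems(1) unfolding x1_def x2_def by auto
    qed
    have cl1: "\<forall>K. is_clique V E K \<and> K \<subseteq> {i\<in>V. x1 i \<noteq> 0} \<longrightarrow> card K \<le> r"
    proof (intro allI impI)
      fix K assume K: "is_clique V E K \<and> K \<subseteq> {i\<in>V. x1 i \<noteq> 0}"
      then have "K \<subseteq> {i\<in>V. x i \<noteq> 0}" unfolding sup1 S_def by blast
      then show "card K \<le> r" using spec[OF less.prems(2), of K] K by blast
    qed
    have cl2: "\<forall>K. is_clique V E K \<and> K \<subseteq> {i\<in>V. x2 i \<noteq> 0} \<longrightarrow> card K \<le> r"
    proof (intro allI impI)
      fix K assume K: "is_clique V E K \<and> K \<subseteq> {i\<in>V. x2 i \<noteq> 0}"
      then have "K \<subseteq> {i\<in>V. x i \<noteq> 0}" unfolding sup2 S_def by blast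
      then show "card K \<le> r" using spec[OF less.prems(2), of K] K by blast
    qed
    have s1: "sum x1 V = sum x V"
    proof -
      have "sum x1 (V - {u} - {v}) = sum x (V - {u} - {v})"
        by (rule sum.cong[OF refl]) (use x1u(3) in blast)
      then show ?thesis using sum_two[OF assms(1) uV uv(3), of x1] sum_two[OF assms(1) uV uv(3), of x]
        x1val(1) x1u(2) by linarith
    qed
    have s2: "sum x2 V = sum x V"
    proof -
      have "sum x2 (V - {u} - {v}) = sum x (V - {u} - {v})"
        by (rule sum.cong[OF refl]) (use x2u(3) in blast)
      then show ?thesis using sum_two[OF assms(1) uV uv(3), of x2] sum_two[OF assms(1) uV uv(3), of x]
        x1val(2) x2u(2) by linarith
    qed
    have IH1: "PP V E s x1 \<le> real (r choose s) * (sum x V / real r) ^ s"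
      using less.hyps[OF lt1 nn1(1) cl1] s1 by simp
    have IH2: "PP V E s x2 \<le> real (r choose s) * (sum x V / real r) ^ s"
      using less.hyps[OF lt2 nn1(2) cl2] s2 by simp
    define N where "N = (\<Sum>K\<in>{K\<in>CL V E s. u \<notin> K \<and> v \<notin> K}. \<Prod>i\<in>K. x i)"
    define A where "A = (\<Sum>K\<in>{K\<in>CL V E s. u \<in> K}. \<Prod>i\<in>K - {u}. x i)"
    define B where "B = (\<Sum>K\<in>{K\<in>CL V E s. v \<in> K}. \<Prod>i\<in>K - {v}. x i)"
    have e0: "\<forall>i. i \<noteq> u \<and> i \<noteq> v \<longrightarrow> x i = x i" by blast
    have e1: "\<forall>i. i \<noteq> u \<and> i \<noteq> v \<longrightarrow> x1 i = x i" using x1u(3) by blast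
    have e2: "\<forall>i. i \<noteq> u \<and> i \<noteq> v \<longrightarrow> x2 i = x i" using x2u(3) by blast
    have D0: "PP V E s x = N + x u * A + x v * B"
      unfolding N_def A_def B_def by (rule PP_decomp[OF assms(1) uv(3,4) e0])
    have D1': "PP V E s x1 = N + x1 u * A + x1 v * B"
      unfolding N_def A_def B_def by (rule PP_decomp[OF assms(1) uv(3,4) e1])
    have D2': "PP V E s x2 = N + x2 u * A + x2 v * B"
      unfolding N_def A_def B_def by (rule PP_decomp[OF assms(1) uv(3,4) e2])
    have D1: "PP V E s x1 = N + (x u + x v) * A" using D1' x1val(1) x1u(2) by simp
    have D2: "PP V E s x2 = N + (x u + x v) * B" using D2' x1val(2) x2u(2) by simp
    show ?thesis
    proof (cases "A \<ge> B")
      case True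
      have "x v * B \<le> x v * A" using True xpos by (intro mult_left_mono) auto
      then have "PP V E s x \<le> PP V E s x1" using D0 D1 by (simp add: algebra_simps)
      then show ?thesis using IH1 by linarith
    next
      case False
      have "x u * A \<le> x u * B" using False xpos by (intro mult_left_mono) auto
      then have "PP V E s x \<le> PP V E s x2" using D0 D2 by (simp add: algebra_simps)
      then show ?thesis using IH2 by linarith
    qed
  qed
qed




lemma clique_card_le:
  assumes "(V, E) \<in> graph_class \<Delta> \<omega>" "is_clique V E K"
  shows "card K \<le> \<omega>"
proof -
  have fV: "finite V" using assms(1) by (auto simp: graph_class_def simple_graph_def)
  have fin: "finite (card ` {K. is_clique V E K})"
    by (rule finite_imageI, rule finite_subset[of _ "Pow V"]) (use fV in \<open>auto simp: is_clique_def\<close>)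
  have "card K \<le> clique_number V E"
    unfolding clique_number_def using fin assms(2) by (intro Max_ge) auto
  then show ?thesis using assms(1) by (auto simp: graph_class_def)
qed

lemma degree_le:
  assumes "(V, E) \<in> graph_class \<Delta> \<omega>" "v \<in> V"
  shows "degree V E v \<le> \<Delta>"
proof -
  have fV: "finite V" using assms(1) by (auto simp: graph_class_def simple_graph_def)
  have "degree V E v \<le> max_degree V E"
    unfolding max_degree_def using fV assms(2) by (intro Max_ge) auto
  then show ?thesis using assms(1) by (auto simp: graph_class_def)
qed

lemma sum_of_bool_card:
  assumes "finite A"
  shows "(\<Sum>a\<in>A. (if P a then 1 else 0 :: real)) = real (card {a\<in>A. P a})"
  using assms by (simp add: sum.inter_filter[symmetric])

lemma count_at_vertex:
  assumes sg: "simple_graph V E" and vV: "v \<in> V" and t: "t = Suc s"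
  defines "N \<equiv> {u\<in>V. {u, v} \<in> E}"
  shows "real (card {K\<in>CL V E t. v \<in> K}) = PP V E s (\<lambda>i. if i \<in> N then 1 else 0)"
proof -
  have fV: "finite V" using sg by (simp add: simple_graph_def)
  have vE: "{v, v} \<notin> E" using sg by (auto simp: simple_graph_def)
  have vN: "v \<notin> N" using vE by (simp add: N_def)
  have NV: "N \<subseteq> V" by (auto simp: N_def)
  have eq: "{K\<in>CL V E t. v \<in> K} = insert v ` {J\<in>CL V E s. J \<subseteq> N}"
  proof (intro set_eqI iffI)
    fix K assume K: "K \<in> {K\<in>CL V E t. v \<in> K}"
    have KV: "K \<subseteq> V" and cl: "\<forall>a\<in>K. \<forall>b\<in>K. a \<noteq> b \<longrightarrow> {a, b} \<in> E" and cK: "card K = t"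
      using K by (auto simp: CL_def is_clique_def)
    have fK: "finite K" using KV fV finite_subset by blast
    have "K - {v} \<in> {J\<in>CL V E s. J \<subseteq> N}"
      using K KV cl cK fK t unfolding CL_def is_clique_def N_def by auto
    moreover have "K = insert v (K - {v})" using K by auto
    ultimately show "K \<in> insert v ` {J\<in>CL V E s. J \<subseteq> N}" by blast
  next
    fix K assume "K \<in> insert v ` {J\<in>CL V E s. J \<subseteq> N}"
    then obtain J where J: "J \<in> CL V E s" "J \<subseteq> N" "K = insert v J" by auto
    have JV: "J \<subseteq> V" and cl: "\<forall>a\<in>J. \<forall>b\<in>J. a \<noteq> b \<longrightarrow> {a, b} \<in> E" and cJ: "card J = s"
      using J by (auto simp: CL_def is_clique_def)
    have fJ: "finite J" using JV fV finite_subset by blast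
    have vJ: "v \<notin> J" using J vN by auto
    have "is_clique V E K"
      unfolding is_clique_def
    proof (intro conjI ballI impI)
      show "K \<subseteq> V" using J JV vV by auto
    next
      fix a b assume ab: "a \<in> K" "b \<in> K" "a \<noteq> b"
      show "{a, b} \<in> E"
      proof (cases "a = v")
        case True
        then have "b \<in> N" using ab J by auto
        then show ?thesis using True by (auto simp: N_def insert_commute)
      next
        case False
        note aF = False
        show ?thesis
        proof (cases "b = v")
          case True
          then have "a \<in> N" using ab J aF by auto
          then show ?thesis using True by (auto simp: N_def)
        next
          case False
          then show ?thesis using aF ab J cl by auto
        qed
      qed
    qed
    moreover have "card K = t" using J fJ vJ cJ t by simp
    ultimately show "K \<in> {K\<in>CL V E t. v \<in> K}" using J by (auto simp: CL_def)
  qed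
  have inj: "inj_on (insert v) {J\<in>CL V E s. J \<subseteq> N}"
    using vN by (intro inj_onI) (metis (no_types, lifting) Diff_insert_absorb mem_Collect_eq subsetD)
  have "card {K\<in>CL V E t. v \<in> K} = card {J\<in>CL V E s. J \<subseteq> N}"
    unfolding eq by (rule card_image[OF inj])
  also have "real (card {J\<in>CL V E s. J \<subseteq> N}) = PP V E s (\<lambda>i. if i \<in> N then 1 else 0)"
  proof -
    have "PP V E s (\<lambda>i. if i \<in> N then 1 else 0) = (\<Sum>J\<in>CL V E s. (if J \<subseteq> N then 1 else 0 :: real))"
      unfolding PP_def
    proof (rule sum.cong[OF refl])
      fix J assume J: "J \<in> CL V E s"
      have fJ: "finite J" using J fV finite_subset by (auto simp: CL_def is_clique_def)
      show "(\<Prod>i\<in>J. if i \<in> N then 1 else 0 :: real) = (if J \<subseteq> N then 1 else 0)"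
      proof (cases "J \<subseteq> N")
        case True
        have "(\<Prod>i\<in>J. if i \<in> N then 1 else 0 :: real) = 1"
          by (rule prod.neutral) (use True in auto)
        then show ?thesis using True by simp
      next
        case False
        then obtain i where "i \<in> J" "i \<notin> N" by auto
        then show ?thesis using fJ False by (auto intro: prod_zero)
      qed
    qed
    also have "\<dots> = real (card {J\<in>CL V E s. J \<subseteq> N})"
      by (rule sum_of_bool_card[OF finite_CL[OF fV]])
    finally show ?thesis by simp
  qed
  finally show ?thesis .
qed

lemma double_count:
  assumes fV: "finite V"
  shows "t * card (CL V E t) = (\<Sum>v\<in>V. card {K\<in>CL V E t. v \<in> K})"
proof -
  have fC: "finite (CL V E t)" using fV by (rule finite_CL)
  have "(\<Sum>v\<in>V. card {K\<in>CL V E t. v \<in> K}) = (\<Sum>v\<in>V. \<Sum>K\<in>CL V E t. (if v \<in> K then 1 else 0 :: nat))"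
    using fC by (simp add: sum.inter_filter[symmetric])
  also have "\<dots> = (\<Sum>K\<in>CL V E t. \<Sum>v\<in>V. (if v \<in> K then 1 else 0 :: nat))"
    by (rule sum.swap)
  also have "\<dots> = (\<Sum>K\<in>CL V E t. t)"
  proof (rule sum.cong[OF refl])
    fix K assume K: "K \<in> CL V E t"
    have "K \<subseteq> V" "card K = t" using K by (auto simp: CL_def is_clique_def)
    then have "{v\<in>V. v \<in> K} = K" by auto
    then show "(\<Sum>v\<in>V. (if v \<in> K then 1 else 0 :: nat)) = t"
      using fV \<open>card K = t\<close> by (simp add: sum.inter_filter[symmetric])
  qed
  also have "\<dots> = t * card (CL V E t)" by simp
  finally show ?thesis by simp
qed

definition Bf :: "nat \<Rightarrow> nat \<Rightarrow> nat \<Rightarrow> real" where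
  "Bf t \<omega> \<Delta> = (1 / real t) * real ((\<omega> - 1) choose (t - 1)) * (real \<Delta> / real (\<omega> - 1)) ^ (t - 1)"

lemma rho_upper:
  assumes t2: "2 \<le> t" and tw: "t \<le> \<omega>" and G: "(V, E) \<in> graph_class \<Delta> \<omega>" and n1: "card V \<ge> 1"
  shows "rho t V E \<le> Bf t \<omega> \<Delta>"
proof -
  define r where "r = \<omega> - 1"
  define s where "s = t - 1"
  have sg: "simple_graph V E" using G by (simp add: graph_class_def)
  have fV: "finite V" using sg by (simp add: simple_graph_def)
  have rp: "r > 0" using t2 tw by (simp add: r_def)
  have ts: "t = Suc s" using t2 by (simp add: s_def)
  have per: "real (card {K\<in>CL V E t. v \<in> K}) \<le> real (r choose s) * (real \<Delta> / real r) ^ s"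
    if vV: "v \<in> V" for v
  proof -
    define N where "N = {u\<in>V. {u, v} \<in> E}"
    define x where "x = (\<lambda>i. if i \<in> N then 1 else 0 :: real)"
    have vE: "{v, v} \<notin> E" using sg by (auto simp: simple_graph_def)
    have NV: "N \<subseteq> V" by (auto simp: N_def)
    have supp: "{i\<in>V. x i \<noteq> 0} = N" using NV by (auto simp: x_def)
    have cl: "\<forall>K. is_clique V E K \<and> K \<subseteq> {i\<in>V. x i \<noteq> 0} \<longrightarrow> card K \<le> r"
    proof (intro allI impI)
      fix K assume K: "is_clique V E K \<and> K \<subseteq> {i\<in>V. x i \<noteq> 0}"
      then have KN: "K \<subseteq> N" using supp by simp
      have vK: "v \<notin> K" using KN vE by (auto simp: N_def)
      have fK: "finite K" using K fV finite_subset by (auto simp: is_clique_def)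
      have "is_clique V E (insert v K)"
        using K KN vV unfolding is_clique_def N_def by (auto simp: insert_commute)
      then have "card (insert v K) \<le> \<omega>" using clique_card_le[OF G] by blast
      then show "card K \<le> r" using vK fK by (simp add: r_def)
    qed
    have sx: "sum x V = real (degree V E v)"
      unfolding x_def degree_def N_def using fV by (simp add: sum_of_bool_card)
    have "real (card {K\<in>CL V E t. v \<in> K}) = PP V E s x"
      using count_at_vertex[OF sg vV ts] unfolding x_def N_def by simp
    also have "\<dots> \<le> real (r choose s) * (sum x V / real r) ^ s"
      by (rule lagr[OF fV rp]) (auto simp: x_def cl[unfolded x_def])
    also have "\<dots> \<le> real (r choose s) * (real \<Delta> / real r) ^ s"
      unfolding sx using degree_le[OF G vV] rp
      by (intro mult_left_mono power_mono divide_right_mono) auto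
    finally show ?thesis .
  qed
  have "real t * real (num_cliques t V E) = real (\<Sum>v\<in>V. card {K\<in>CL V E t. v \<in> K})"
    using double_count[OF fV, of t E] unfolding num_cliques_def CL_def
    by (metis of_nat_mult)
  also have "\<dots> = (\<Sum>v\<in>V. real (card {K\<in>CL V E t. v \<in> K}))" by simp
  also have "\<dots> \<le> (\<Sum>v\<in>V. real (r choose s) * (real \<Delta> / real r) ^ s)"
    using per by (intro sum_mono) auto
  also have "\<dots> = real (card V) * (real (r choose s) * (real \<Delta> / real r) ^ s)" by simp
  finally have ineq: "real t * real (num_cliques t V E) \<le> real (card V) * (real (r choose s) * (real \<Delta> / real r) ^ s)" .
  define X where "X = real (r choose s) * (real \<Delta> / real r) ^ s"
  have np: "real (card V) > 0" using n1 by simp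
  have tp: "real t > 0" using t2 by simp
  have "real (num_cliques t V E) / real (card V) \<le> X / real t"
    by (rule cross_le[OF np tp]) (use ineq in \<open>simp add: X_def algebra_simps\<close>)
  moreover have "Bf t \<omega> \<Delta> = X / real t" unfolding Bf_def X_def r_def s_def by simp
  ultimately show ?thesis unfolding rho_def by simp
qed




lemma turan_edge:
  "{a, b} \<in> turan_E n w \<longleftrightarrow> a < n \<and> b < n \<and> a mod w \<noteq> b mod w"
proof
  assume "{a, b} \<in> turan_E n w"
  then obtain i j where ij: "{a, b} = {i, j}" "i < n" "j < n" "i mod w \<noteq> j mod w"
    unfolding turan_E_def by blast
  then have "a = i \<and> b = j \<or> a = j \<and> b = i" by (simp add: doubleton_eq_iff)
  then show "a < n \<and> b < n \<and> a mod w \<noteq> b mod w" using ij by auto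
next
  assume "a < n \<and> b < n \<and> a mod w \<noteq> b mod w"
  then show "{a, b} \<in> turan_E n w" unfolding turan_E_def by blast
qed

lemma turan_E_elem:
  assumes "e \<in> turan_E n w"
  shows "e \<subseteq> {0..<n} \<and> card e = 2"
proof -
  obtain i j where ij: "e = {i, j}" "i < n" "j < n" "i mod w \<noteq> j mod w"
    using assms unfolding turan_E_def by blast
  then have "i \<noteq> j" by auto
  then show ?thesis using ij by auto
qed

lemma turan_simple: "simple_graph (turan_V n) (turan_E n w)"
  unfolding simple_graph_def turan_V_def using turan_E_elem by blast

lemma turan_clique_card:
  assumes "w > 0" "is_clique (turan_V n) (turan_E n w) K"
  shows "card K \<le> w"
proof -
  have "inj_on (\<lambda>u. u mod w) K"
  proof (rule inj_onI)
    fix a b assume ab: "a \<in> K" "b \<in> K" "a mod w = b mod w"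
    show "a = b"
    proof (rule ccontr)
      assume "a \<noteq> b"
      then have "{a, b} \<in> turan_E n w" using assms(2) ab unfolding is_clique_def by blast
      then show False using ab(3) by (simp add: turan_edge)
    qed
  qed
  moreover have "(\<lambda>u. u mod w) ` K \<subseteq> {0..<w}" using assms(1) by auto
  ultimately show ?thesis using card_inj_on_le[of "\<lambda>u. u mod w" K "{0..<w}"] by simp
qed

lemma res_block:
  fixes w i q c :: nat
  assumes "w > 0" "i < q" "c < w"
  shows "c + w * i < q * w"
proof -
  have "w * (i + 1) \<le> w * q" using assms(2) by (intro mult_le_mono2) simp
  then show ?thesis using assms(3) by (simp add: algebra_simps)
qed

lemma res_eq:
  fixes w c c' a b :: nat
  assumes "w > 0" "c < w" "c' < w" "c + w * a = c' + w * b"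
  shows "c = c' \<and> a = b"
proof -
  have "(c + w * a) mod w = (c' + w * b) mod w" using assms(4) by simp
  then have cc: "c = c'" using assms(2,3) by simp
  then have "w * a = w * b" using assms(4) by simp
  then show ?thesis using cc assms(1) by simp
qed

lemma turan_in_class:
  fixes w \<Delta> :: nat
  assumes w2: "w \<ge> 2"
  defines "n \<equiv> \<Delta> + \<Delta> div (w - 1)"
  shows "(turan_V n, turan_E n w) \<in> graph_class \<Delta> w"
proof -
  define d where "d = w - 1"
  define q where "q = \<Delta> div d"
  have wp: "w > 0" using w2 by simp
  have wd: "w = d + 1" using w2 by (simp add: d_def)
  have nq: "n = \<Delta> + q" by (simp add: n_def q_def d_def)
  have dq: "d * q \<le> \<Delta>" by (simp add: q_def)
  have qw: "q * w \<le> n" using dq nq wd by (simp add: algebra_simps)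
  have deg: "degree (turan_V n) (turan_E n w) v \<le> \<Delta>" if vV: "v \<in> turan_V n" for v
  proof -
    define Rv where "Rv = {u\<in>{0..<n}. u mod w = v mod w}"
    have vn: "v < n" using vV by (simp add: turan_V_def)
    have seteq: "{u \<in> turan_V n. {u, v} \<in> turan_E n w} = {0..<n} - Rv"
      using vn by (auto simp: turan_V_def turan_edge Rv_def)
    have RvS: "Rv \<subseteq> {0..<n}" by (auto simp: Rv_def)
    have fR: "finite Rv" using RvS finite_subset by blast
    have "(\<lambda>i. v mod w + w * i) ` {0..<q} \<subseteq> Rv"
    proof
      fix y assume "y \<in> (\<lambda>i. v mod w + w * i) ` {0..<q}"
      then obtain i where i: "i < q" "y = v mod w + w * i" by auto
      have "y < q * w" using res_block[OF wp i(1), of "v mod w"] wp i(2) by simp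
      then have "y < n" using qw by simp
      moreover have "y mod w = v mod w" using i(2) by simp
      ultimately show "y \<in> Rv" by (simp add: Rv_def)
    qed
    moreover have "inj_on (\<lambda>i. v mod w + w * i) {0..<q}"
      using wp by (intro inj_onI) simp
    ultimately have "card {0..<q} \<le> card Rv"
      using fR by (metis card_image card_mono)
    then have cR: "q \<le> card Rv" by simp
    have "degree (turan_V n) (turan_E n w) v = card ({0..<n} - Rv)"
      unfolding degree_def seteq ..
    also have "\<dots> = n - card Rv" using RvS fR by (simp add: card_Diff_subset)
    also have "\<dots> \<le> \<Delta>" using cR nq by simp
    finally show ?thesis .
  qed
  have md: "max_degree (turan_V n) (turan_E n w) \<le> \<Delta>"
    unfolding max_degree_def using deg by (simp add: turan_V_def)
  have fin: "finite (card ` {K. is_clique (turan_V n) (turan_E n w) K})"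
    by (rule finite_imageI, rule finite_subset[of _ "Pow {0..<n}"]) (auto simp: is_clique_def turan_V_def)
  have ne: "{K. is_clique (turan_V n) (turan_E n w) K} \<noteq> {}"
  proof -
    have "is_clique (turan_V n) (turan_E n w) {}" by (simp add: is_clique_def)
    then show ?thesis by blast
  qed
  have cn: "clique_number (turan_V n) (turan_E n w) \<le> w"
    unfolding clique_number_def using fin ne turan_clique_card[OF wp] by simp
  show ?thesis unfolding graph_class_def using turan_simple md cn by simp
qed

lemma turan_cliques_lower:
  assumes wp: "w > 0" and qw: "q * w \<le> n"
  shows "(w choose t) * q ^ t \<le> num_cliques t (turan_V n) (turan_E n w)"
proof -
  define Rs where "Rs = {R. R \<subseteq> {0..<w} \<and> card R = t}"
  define D where "D = (SIGMA R:Rs. PiE R (\<lambda>_. {0..<q}))"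
  define F where "F = (\<lambda>(R, g). (\<lambda>\<rho>. \<rho> + w * g \<rho>) ` (R::nat set))"
  have fRs: "finite Rs" unfolding Rs_def by simp
  have finR: "\<And>R. R \<in> Rs \<Longrightarrow> finite R" unfolding Rs_def using finite_subset by blast
  have cD: "card D = (w choose t) * q ^ t"
  proof -
    have "card D = (\<Sum>R\<in>Rs. card (PiE R (\<lambda>_. {0..<q})))"
      unfolding D_def using fRs finR by (intro card_SigmaI) (auto intro: finite_PiE)
    also have "\<dots> = (\<Sum>R\<in>Rs. q ^ t)"
    proof (rule sum.cong[OF refl])
      fix R assume R: "R \<in> Rs"
      then show "card (PiE R (\<lambda>_. {0..<q})) = q ^ t"
        using finR[OF R] by (simp add: card_PiE Rs_def)
    qed
    also have "\<dots> = card Rs * q ^ t" by simp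
    also have "card Rs = w choose t" unfolding Rs_def using n_subsets[of "{0..<w}" t] by simp
    finally show ?thesis .
  qed
  have img: "F x \<in> {K. is_clique (turan_V n) (turan_E n w) K \<and> card K = t}" if x: "x \<in> D" for x
  proof -
    obtain R g where xRg: "x = (R, g)" by (cases x)
    have R: "R \<in> Rs" and g: "g \<in> PiE R (\<lambda>_. {0..<q})" using x xRg by (auto simp: D_def)
    have Rw: "\<And>\<rho>. \<rho> \<in> R \<Longrightarrow> \<rho> < w" using R by (auto simp: Rs_def)
    have gq: "\<And>\<rho>. \<rho> \<in> R \<Longrightarrow> g \<rho> < q" using g by auto
    have lt: "\<And>\<rho>. \<rho> \<in> R \<Longrightarrow> \<rho> + w * g \<rho> < n"
      using res_block[OF wp gq Rw] qw by (meson less_le_trans)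
    have md: "\<And>\<rho>. \<rho> \<in> R \<Longrightarrow> (\<rho> + w * g \<rho>) mod w = \<rho>" using Rw by simp
    have inj: "inj_on (\<lambda>\<rho>. \<rho> + w * g \<rho>) R"
    proof (rule inj_onI)
      fix a b assume "a \<in> R" "b \<in> R" "a + w * g a = b + w * g b"
      then show "a = b" using res_eq[OF wp Rw Rw] by blast
    qed
    have cl: "is_clique (turan_V n) (turan_E n w) ((\<lambda>\<rho>. \<rho> + w * g \<rho>) ` R)"
      unfolding is_clique_def
    proof (intro conjI ballI impI)
      show "(\<lambda>\<rho>. \<rho> + w * g \<rho>) ` R \<subseteq> turan_V n" using lt by (auto simp: turan_V_def)
    next
      fix a b assume a: "a \<in> (\<lambda>\<rho>. \<rho> + w * g \<rho>) ` R" and b: "b \<in> (\<lambda>\<rho>. \<rho> + w * g \<rho>) ` R"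
        and ab: "a \<noteq> b"
      obtain \<rho>1 where r1: "\<rho>1 \<in> R" "a = \<rho>1 + w * g \<rho>1" using a by blast
      obtain \<rho>2 where r2: "\<rho>2 \<in> R" "b = \<rho>2 + w * g \<rho>2" using b by blast
      have "\<rho>1 \<noteq> \<rho>2" using r1 r2 ab by blast
      then have "a mod w \<noteq> b mod w" using r1 r2 md by simp
      then show "{a, b} \<in> turan_E n w" using r1 r2 lt by (simp add: turan_edge)
    qed
    have "card ((\<lambda>\<rho>. \<rho> + w * g \<rho>) ` R) = t" using card_image[OF inj] R by (simp add: Rs_def)
    then show ?thesis using cl xRg by (simp add: F_def)
  qed
  have injF: "inj_on F D"
  proof (rule inj_onI)
    fix x y assume x: "x \<in> D" and y: "y \<in> D" and e: "F x = F y"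
    obtain R1 g1 where x1: "x = (R1, g1)" by (cases x)
    obtain R2 g2 where y1: "y = (R2, g2)" by (cases y)
    have R1: "R1 \<in> Rs" and g1: "g1 \<in> PiE R1 (\<lambda>_. {0..<q})" using x x1 by (auto simp: D_def)
    have R2: "R2 \<in> Rs" and g2: "g2 \<in> PiE R2 (\<lambda>_. {0..<q})" using y y1 by (auto simp: D_def)
    have Rw1: "\<And>\<rho>. \<rho> \<in> R1 \<Longrightarrow> \<rho> < w" using R1 by (auto simp: Rs_def)
    have Rw2: "\<And>\<rho>. \<rho> \<in> R2 \<Longrightarrow> \<rho> < w" using R2 by (auto simp: Rs_def)
    have E: "(\<lambda>\<rho>. \<rho> + w * g1 \<rho>) ` R1 = (\<lambda>\<rho>. \<rho> + w * g2 \<rho>) ` R2"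
      using e x1 y1 by (simp add: F_def)
    have sub12: "\<rho> \<in> R2 \<and> g1 \<rho> = g2 \<rho>" if r: "\<rho> \<in> R1" for \<rho>
    proof -
      have "\<rho> + w * g1 \<rho> \<in> (\<lambda>\<rho>. \<rho> + w * g2 \<rho>) ` R2" using r E by blast
      then obtain \<rho>' where r': "\<rho>' \<in> R2" "\<rho> + w * g1 \<rho> = \<rho>' + w * g2 \<rho>'" by blast
      have "\<rho> = \<rho>' \<and> g1 \<rho> = g2 \<rho>'" using res_eq[OF wp Rw1[OF r] Rw2[OF r'(1)] r'(2)] .
      then have "\<rho> = \<rho>'" "g1 \<rho> = g2 \<rho>'" by auto
      then show ?thesis using r'(1) by simp
    qed
    have sub21: "\<rho> \<in> R1" if r: "\<rho> \<in> R2" for \<rho>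
    proof -
      have "\<rho> + w * g2 \<rho> \<in> (\<lambda>\<rho>. \<rho> + w * g1 \<rho>) ` R1" using r E by blast
      then obtain \<rho>' where r': "\<rho>' \<in> R1" "\<rho> + w * g2 \<rho> = \<rho>' + w * g1 \<rho>'" by blast
      have "\<rho> = \<rho>' \<and> g2 \<rho> = g1 \<rho>'" using res_eq[OF wp Rw2[OF r] Rw1[OF r'(1)] r'(2)] .
      then show ?thesis using r' by simp
    qed
    have RR: "R1 = R2" using sub12 sub21 by blast
    have "g1 = g2"
      by (rule PiE_ext[OF g1]) (use g2 RR sub12 in auto)
    then show "x = y" using x1 y1 RR by simp
  qed
  have finCL: "finite {K. is_clique (turan_V n) (turan_E n w) K \<and> card K = t}"
    by (rule finite_subset[of _ "Pow {0..<n}"]) (auto simp: is_clique_def turan_V_def)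
  have "card D = card (F ` D)" using card_image[OF injF] by simp
  also have "\<dots> \<le> card {K. is_clique (turan_V n) (turan_E n w) K \<and> card K = t}"
    using img finCL by (intro card_mono) auto
  finally show ?thesis using cD unfolding num_cliques_def by simp
qed




lemma fsup_bounds:
  assumes t2: "2 \<le> t" and tw: "t \<le> \<omega>" and D1: "\<Delta> \<ge> 1"
  shows "rho t (turan_V (\<Delta> + \<Delta> div (\<omega> - 1))) (turan_E (\<Delta> + \<Delta> div (\<omega> - 1)) \<omega>) \<le> f_sup t \<Delta> \<omega>"
    and "f_sup t \<Delta> \<omega> \<le> Bf t \<omega> \<Delta>"
proof -
  define n where "n = \<Delta> + \<Delta> div (\<omega> - 1)"
  define X where "X = {rho t V E | V E. (V, E) \<in> graph_class \<Delta> \<omega> \<and> card V \<ge> 1}"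
  have w2: "\<omega> \<ge> 2" using t2 tw by simp
  have Tin: "(turan_V n, turan_E n \<omega>) \<in> graph_class \<Delta> \<omega>"
    unfolding n_def by (rule turan_in_class[OF w2])
  have cT: "card (turan_V n) \<ge> 1" using D1 by (simp add: turan_V_def n_def)
  have mem: "rho t (turan_V n) (turan_E n \<omega>) \<in> X" unfolding X_def using Tin cT by blast
  have ub: "\<forall>x\<in>X. x \<le> Bf t \<omega> \<Delta>" unfolding X_def using rho_upper[OF t2 tw] by blast
  have bdd: "bdd_above X" using ub by (auto simp: bdd_above_def)
  have fX: "f_sup t \<Delta> \<omega> = Sup X" unfolding f_sup_def X_def ..
  show "rho t (turan_V (\<Delta> + \<Delta> div (\<omega> - 1))) (turan_E (\<Delta> + \<Delta> div (\<omega> - 1)) \<omega>) \<le> f_sup t \<Delta> \<omega>"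
    unfolding fX n_def[symmetric] using mem bdd by (rule cSup_upper)
  show "f_sup t \<Delta> \<omega> \<le> Bf t \<omega> \<Delta>"
    unfolding fX using mem ub by (intro cSup_least) auto
qed

lemma lower_est:
  assumes t2: "2 \<le> t" and tw: "t \<le> \<omega>" and D1: "\<Delta> \<ge> 1" and Dd: "\<Delta> \<ge> \<omega> - 1"
  shows "Bf t \<omega> \<Delta> * (1 - real (\<omega> - 1) / real \<Delta>) ^ t
         \<le> rho t (turan_V (\<Delta> + \<Delta> div (\<omega> - 1))) (turan_E (\<Delta> + \<Delta> div (\<omega> - 1)) \<omega>)"
proof -
  define d where "d = \<omega> - 1"
  define s where "s = t - 1"
  define q where "q = \<Delta> div d"
  define n where "n = \<Delta> + q"
  have d1: "d \<ge> 1" using t2 tw by (simp add: d_def)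
  have wd: "\<omega> = d + 1" using t2 tw by (simp add: d_def)
  have ts: "t = Suc s" using t2 by (simp add: s_def)
  have dq: "d * q \<le> \<Delta>" by (simp add: q_def)
  have qw: "q * \<omega> \<le> n" using dq wd by (simp add: n_def algebra_simps)
  have dqlt: "\<Delta> < d * q + d"
  proof -
    have "\<Delta> = d * q + \<Delta> mod d" by (simp add: q_def)
    moreover have "\<Delta> mod d < d" using d1 by simp
    ultimately show ?thesis by linarith
  qed
  have dn: "d * n \<le> \<omega> * \<Delta>" using dq wd by (simp add: n_def algebra_simps)
  have np: "n \<ge> 1" using D1 by (simp add: n_def)
  define Dr where "Dr = real \<Delta>"
  define dr where "dr = real d"
  define Q where "Q = real q"
  define N where "N = real n"
  define c where "c = real (d choose s)"
  define cw where "cw = real (\<omega> choose t)"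
  have Drp: "Dr > 0" using D1 by (simp add: Dr_def)
  have drp: "dr > 0" using d1 by (simp add: dr_def)
  have Np: "N > 0" using np by (simp add: N_def)
  have Qge: "Q \<ge> 0" by (simp add: Q_def)
  have cge: "c \<ge> 0" by (simp add: c_def)
  have tp: "real t > 0" using t2 by simp
  have tcw: "real t * cw = real \<omega> * c"
  proof -
    have "t * (\<omega> choose t) = \<omega> * ((\<omega> - 1) choose (t - 1))"
      using t2 by (intro times_binomial_minus1_eq) simp
    then show ?thesis unfolding cw_def c_def d_def s_def by (metis of_nat_mult)
  qed
  define h where "h = 1 - dr / Dr"
  have hge: "h \<ge> 0" using Dd Drp unfolding h_def dr_def Dr_def d_def by (simp add: divide_simps)
  have hle: "h \<le> Q * dr / Dr"
  proof -
    have "real \<Delta> < real d * real q + real d" using dqlt by (metis of_nat_add of_nat_less_iff of_nat_mult)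
    then have "Dr - dr \<le> Q * dr" unfolding Dr_def dr_def Q_def by (simp add: algebra_simps)
    then show ?thesis unfolding h_def using Drp by (simp add: divide_simps)
  qed
  have Bfe: "Bf t \<omega> \<Delta> = (1 / real t) * c * (Dr / dr) ^ s"
    unfolding Bf_def c_def Dr_def dr_def d_def s_def ..
  have Bge: "Bf t \<omega> \<Delta> \<ge> 0" unfolding Bfe using cge drp Drp by simp
  have "Bf t \<omega> \<Delta> * h ^ t \<le> Bf t \<omega> \<Delta> * (Q * dr / Dr) ^ t"
    using hge hle Bge by (intro mult_left_mono power_mono) auto
  also have "\<dots> = (1 / real t) * c * (((Dr / dr) * (Q * dr / Dr)) ^ s * (Q * dr / Dr))"
  proof -
    have pw: "(Q * dr / Dr) ^ t = (Q * dr / Dr) ^ s * (Q * dr / Dr)" using ts by simp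
    show ?thesis unfolding Bfe pw power_mult_distrib by (simp add: ac_simps)
  qed
  also have "(Dr / dr) * (Q * dr / Dr) = Q" using drp Drp by simp
  also have "(1 / real t) * c * (Q ^ s * (Q * dr / Dr)) = (c * Q ^ t / real t) * (dr / Dr)"
    unfolding ts by (simp add: algebra_simps)
  also have "\<dots> \<le> (c * Q ^ t / real t) * (real \<omega> / N)"
  proof (rule mult_left_mono)
    have "dr * N \<le> real \<omega> * Dr" unfolding dr_def N_def Dr_def using dn by (metis of_nat_le_iff of_nat_mult)
    then show "dr / Dr \<le> real \<omega> / N" using Drp Np by (rule_tac cross_le) auto
    show "0 \<le> c * Q ^ t / real t" using cge Qge tp by simp
  qed
  also have "\<dots> = cw * Q ^ t / N"
  proof -
    have "(c * Q ^ t / real t) * (real \<omega> / N) = (real \<omega> * c) * Q ^ t / (real t * N)" by simp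
    also have "\<dots> = (real t * cw) * Q ^ t / (real t * N)" using tcw by simp
    also have "\<dots> = cw * Q ^ t / N" using tp by simp
    finally show ?thesis .
  qed
  also have "\<dots> \<le> real (num_cliques t (turan_V n) (turan_E n \<omega>)) / N"
  proof -
    have "(\<omega> choose t) * q ^ t \<le> num_cliques t (turan_V n) (turan_E n \<omega>)"
      using turan_cliques_lower[of \<omega> q n t] qw wd by simp
    then have "cw * Q ^ t \<le> real (num_cliques t (turan_V n) (turan_E n \<omega>))"
      unfolding cw_def Q_def by (metis of_nat_le_iff of_nat_mult of_nat_power)
    then show ?thesis using Np by (simp add: divide_right_mono)
  qed
  also have "\<dots> = rho t (turan_V n) (turan_E n \<omega>)"
    unfolding rho_def N_def by (simp add: turan_V_def)
  finally show ?thesis unfolding h_def dr_def Dr_def n_def q_def d_def .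
qed




theorem mainTheorem6:
  fixes t \<omega> :: nat
  assumes "2 \<le> t" and "t \<le> \<omega>"
  shows "((\<lambda>\<Delta>::nat. f_sup t \<Delta> \<omega>) \<sim>[at_top]
           (\<lambda>\<Delta>. rho t (turan_V (\<Delta> + \<Delta> div (\<omega> - 1))) (turan_E (\<Delta> + \<Delta> div (\<omega> - 1)) \<omega>))) \<and>
         ((\<lambda>\<Delta>::nat. f_sup t \<Delta> \<omega>) \<sim>[at_top]
           (\<lambda>\<Delta>. (1 / real t) * real ((\<omega> - 1) choose (t - 1)) * (real \<Delta> / real (\<omega> - 1)) ^ (t - 1)))"
proof -
  note t2 = assms(1) and tw = assms(2)
  define d where "d = \<omega> - 1"
  define T where "T = (\<lambda>\<Delta>. rho t (turan_V (\<Delta> + \<Delta> div (\<omega> - 1))) (turan_E (\<Delta> + \<Delta> div (\<omega> - 1)) \<omega>))"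
  define f where "f = (\<lambda>\<Delta>::nat. f_sup t \<Delta> \<omega>)"
  define B where "B = (\<lambda>\<Delta>. Bf t \<omega> \<Delta>)"
  define g where "g = (\<lambda>\<Delta>::nat. (1 - real d / real \<Delta>) ^ t)"
  have d1: "d \<ge> 1" using t2 tw by (simp add: d_def)
  have Bpos: "B \<Delta> > 0" if "\<Delta> \<ge> 1" for \<Delta>
  proof -
    have "t - 1 \<le> \<omega> - 1" using tw by simp
    then have "((\<omega> - 1) choose (t - 1)) > 0" by simp
    then show ?thesis unfolding B_def Bf_def using that t2 d1 by (simp add: d_def)
  qed
  have glim: "g \<longlonglongrightarrow> 1"
  proof -
    have "(\<lambda>\<Delta>::nat. real d / real \<Delta>) \<longlonglongrightarrow> 0" by (rule lim_const_over_n)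
    then have "(\<lambda>\<Delta>::nat. 1 - real d / real \<Delta>) \<longlonglongrightarrow> 1 - 0" by (intro tendsto_diff tendsto_const)
    then have "(\<lambda>\<Delta>::nat. (1 - real d / real \<Delta>) ^ t) \<longlonglongrightarrow> (1 - 0) ^ t" by (rule tendsto_power)
    then show ?thesis unfolding g_def by simp
  qed
  have ev: "eventually (\<lambda>\<Delta>. g \<Delta> \<le> T \<Delta> / B \<Delta> \<and> T \<Delta> / B \<Delta> \<le> f \<Delta> / B \<Delta> \<and> f \<Delta> / B \<Delta> \<le> 1) at_top"
  proof (rule eventually_at_top_linorderI[of "max 1 d"])
    fix \<Delta> :: nat assume "max 1 d \<le> \<Delta>"
    then have D1: "\<Delta> \<ge> 1" and Dd: "\<Delta> \<ge> \<omega> - 1" by (auto simp: d_def)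
    have Bp: "B \<Delta> > 0" using Bpos[OF D1] .
    have l: "B \<Delta> * g \<Delta> \<le> T \<Delta>"
      using lower_est[OF t2 tw D1 Dd] unfolding B_def g_def T_def d_def by (simp add: mult.commute)
    have m: "T \<Delta> \<le> f \<Delta>" using fsup_bounds(1)[OF t2 tw D1] unfolding T_def f_def .
    have u: "f \<Delta> \<le> B \<Delta>" using fsup_bounds(2)[OF t2 tw D1] unfolding B_def f_def .
    have "g \<Delta> \<le> T \<Delta> / B \<Delta>" using l Bp by (simp add: pos_le_divide_eq mult.commute)
    moreover have "T \<Delta> / B \<Delta> \<le> f \<Delta> / B \<Delta>" using m Bp by (simp add: divide_right_mono)
    moreover have "f \<Delta> / B \<Delta> \<le> 1" using u Bp by simp
    ultimately show "g \<Delta> \<le> T \<Delta> / B \<Delta> \<and> T \<Delta> / B \<Delta> \<le> f \<Delta> / B \<Delta> \<and> f \<Delta> / B \<Delta> \<le> 1" by blast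
  qed
  have e1: "eventually (\<lambda>\<Delta>. g \<Delta> \<le> f \<Delta> / B \<Delta>) at_top" using ev by eventually_elim auto
  have e2: "eventually (\<lambda>\<Delta>. f \<Delta> / B \<Delta> \<le> 1) at_top" using ev by eventually_elim auto
  have e3: "eventually (\<lambda>\<Delta>. g \<Delta> \<le> T \<Delta> / B \<Delta>) at_top" using ev by eventually_elim auto
  have e4: "eventually (\<lambda>\<Delta>. T \<Delta> / B \<Delta> \<le> 1) at_top" using ev by eventually_elim auto
  have fl: "((\<lambda>\<Delta>. f \<Delta> / B \<Delta>) \<longlongrightarrow> 1) at_top"
    by (rule real_tendsto_sandwich[OF e1 e2 glim tendsto_const])
  have tl: "((\<lambda>\<Delta>. T \<Delta> / B \<Delta>) \<longlongrightarrow> 1) at_top"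
    by (rule real_tendsto_sandwich[OF e3 e4 glim tendsto_const])
  have fB: "f \<sim>[at_top] B" by (rule asymp_equivI'[OF fl])
  have TB: "T \<sim>[at_top] B" by (rule asymp_equivI'[OF tl])
  have fT: "f \<sim>[at_top] T" by (rule asymp_equiv_trans[OF fB asymp_equiv_symI[OF TB]])
  show ?thesis using fT fB unfolding f_def T_def B_def Bf_def by blast
qed


end
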